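(* Let $\mathcal{G}=(\mathcal{V},\mathcal{E})$ be an endotactic reaction network. Then there exists a source-only reaction network $\tilde{\mathcal{G}}=(\tilde{\mathcal{V}},\tilde{\mathcal{E}})$ such that $\mathcal{G}\sqsubseteq\tilde{\mathcal{G}}$ and the nodes of $\tilde{\mathcal{G}}$ are exactly the source nodes of $\mathcal{G}$. Therefore, every endotactic network is effectively source-only.
   Context: A reaction network (E-graph) $\mathcal{G}=(\mathcal{V},\mathcal{E})$ is a finite directed graph whose nodes are distinct elements of a finite set $Y\subset\mathbb{R}^d_{\ge 0}$, with $\mathcal{V}\neq\emptyset$, every node incident to at least one edge, and no edge from a node to itself. For an edge $e$, $\mathbf{s}(e)$ is its source node, $\mathbf{t}(e)$ its target, $\mathbf{v}(e)=\mathbf{t}(e)-\mathbf{s}(e)$. Given positive rate constants $\mathcal{K}=(k_e)$, $\mathcal{G}$ generates the system $\frac{d\mathbf{x}}{dt}=\mathbf{f}_{\mathcal{G}(\mathcal{K})}(\mathbf{x})=\sum_{e}k_e\mathbf{x}^{\mathbf{s}(e)}\mathbf{v}(e)$ ($\mathbf{x}^{\mathbf{y}}=\prod_i x_i^{y_i}$, $0^0=1$). $\mathcal{G}\sqsubseteq\tilde{\mathcal{G}}$ means: for every positive rate constants $\mathcal{K}$ for $\mathcal{G}$ there exist positive rate constants $\tilde{\mathcal{K}}$ for $\tilde{\mathcal{G}}$ with $\mathbf{f}_{\tilde{\mathcal{G}}(\tilde{\mathcal{K}})}=\mathbf{f}_{\mathcal{G}(\mathcal{K})}$ identically. $\mathcal{G}$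 is endotactic if for every $\mathbf{w}\in\mathbb{R}^d$ and $e_i\in\mathcal{E}$ with $\mathbf{w}\cdot\mathbf{v}(e_i)<0$ there exists $e_j\in\mathcal{E}$ with $\mathbf{w}\cdot(\mathbf{s}(e_j)-\mathbf{s}(e_i))<0$ and $\mathbf{w}\cdot\mathbf{v}(e_j)>0$. A network is source-only if every node that is the target of some edge is also the source of some edge. A polynomial dynamical system is source-only if it is generated (for some positive rate constants) by some source-only network; a network is effectively source-only if every system it generates is source-only. *)

theory Defs
  imports "HOL-Analysis.Analysis"
begin

text \<open>Complexes (nodes) are vectors in real^'d (d = CARD('d)). A reaction network is represented by its finite edge set; its
  node set is the set of all endpoints of edges (every node is incident to an edge).\<close>

type_synonym 'd edge = "(real ^ 'd) \<times> (real ^ 'd)"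

definition src :: "'d edge \<Rightarrow> real ^ 'd" where "src e = fst e"
definition tgt :: "'d edge \<Rightarrow> real ^ 'd" where "tgt e = snd e"
definition rvec :: "'d edge \<Rightarrow> real ^ 'd" where "rvec e = tgt e - src e"

definition nodes :: "'d edge set \<Rightarrow> (real ^ 'd) set" where
  "nodes E = src ` E \<union> tgt ` E"

definition reaction_network :: "('d::finite) edge set \<Rightarrow> bool" where
  "reaction_network E \<longleftrightarrow> finite E \<and> E \<noteq> {} \<and>
     (\<forall>e\<in>E. src e \<noteq> tgt e) \<and>
     (\<forall>y\<in>nodes E. \<forall>i. y $ i \<ge> 0)"

text \<open>Monomial x^y = prod_i x_i^{y_i} with the convention 0^0 = 1 (for x >= 0).\<close>
definition monom :: "real ^ ('d::finite) \<Rightarrow> real ^ 'd \<Rightarrow> real" where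
  "monom x y = (\<Prod>i\<in>UNIV. if y $ i = 0 then 1 else x $ i powr y $ i)"

definition pos_rates :: "'d edge set \<Rightarrow> ('d edge \<Rightarrow> real) \<Rightarrow> bool" where
  "pos_rates E K \<longleftrightarrow> (\<forall>e\<in>E. K e > 0)"

definition gen_sys :: "('d::finite) edge set \<Rightarrow> ('d edge \<Rightarrow> real) \<Rightarrow> real ^ 'd \<Rightarrow> real ^ 'd" where
  "gen_sys E K x = (\<Sum>e\<in>E. (K e * monom x (src e)) *\<^sub>R rvec e)"

definition same_sys :: "(real ^ ('d::finite) \<Rightarrow> real ^ 'd) \<Rightarrow> (real ^ 'd \<Rightarrow> real ^ 'd) \<Rightarrow> bool" where
  "same_sys f g \<longleftrightarrow> (\<forall>x. (\<forall>i. x $ i \<ge> 0) \<longrightarrow> f x = g x)"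

definition realizable_sub :: "('d::finite) edge set \<Rightarrow> 'd edge set \<Rightarrow> bool" (infix "\<sqsubseteq>\<^sub>R" 50) where
  "E \<sqsubseteq>\<^sub>R E' \<longleftrightarrow> (\<forall>K. pos_rates E K \<longrightarrow>
      (\<exists>K'. pos_rates E' K' \<and> same_sys (gen_sys E' K') (gen_sys E K)))"

definition endotactic :: "('d::finite) edge set \<Rightarrow> bool" where
  "endotactic E \<longleftrightarrow> (\<forall>w::real^'d. \<forall>ei\<in>E. w \<bullet> rvec ei < 0 \<longrightarrow>
      (\<exists>ej\<in>E. w \<bullet> (src ej - src ei) < 0 \<and> w \<bullet> rvec ej > 0))"

definition source_only :: "('d::finite) edge set \<Rightarrow> bool" where
  "source_only E \<longleftrightarrow> tgt ` E \<subseteq> src ` E"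

definition source_only_sys :: "(real ^ ('d::finite) \<Rightarrow> real ^ 'd) \<Rightarrow> bool" where
  "source_only_sys f \<longleftrightarrow> (\<exists>E K. reaction_network E \<and> source_only E \<and> pos_rates E K \<and>
      same_sys (gen_sys E K) f)"

definition eff_source_only :: "('d::finite) edge set \<Rightarrow> bool" where
  "eff_source_only E \<longleftrightarrow> (\<forall>K. pos_rates E K \<longrightarrow> source_only_sys (gen_sys E K))"

end

theory Submission imports Defs begin

lemma cone_sub:
  fixes f :: "'b \<Rightarrow> 'a::real_vector"
  assumes "finite Z"
  shows "convex_cone hull (f ` Z) \<subseteq> {v. \<exists>u. (\<forall>z\<in>Z. u z \<ge> 0) \<and> v = (\<Sum>z\<in>Z. u z *\<^sub>R f z)}"
proof (rule hull_minimal)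
  show "f ` Z \<subseteq> {v. \<exists>u. (\<forall>z\<in>Z. u z \<ge> 0) \<and> v = (\<Sum>z\<in>Z. u z *\<^sub>R f z)}"
  proof safe
    fix z assume z: "z \<in> Z"
    show "\<exists>u. (\<forall>z\<in>Z. u z \<ge> 0) \<and> f z = (\<Sum>z\<in>Z. u z *\<^sub>R f z)"
    proof (rule exI[of _ "\<lambda>w. if w = z then 1 else 0"], intro conjI)
      have "(\<Sum>w\<in>Z. (if w = z then 1 else 0) *\<^sub>R f w) = (\<Sum>w\<in>Z. if w = z then f w else 0)"
        by (rule sum.cong) auto
      also have "\<dots> = f z" using z assms by (simp add: sum.delta)
      finally show "f z = (\<Sum>w\<in>Z. (if w = z then 1 else 0) *\<^sub>R f w)" by simp
    qed simp
  qed
  show "convex_cone {v. \<exists>u. (\<forall>z\<in>Z. u z \<ge> 0) \<and> v = (\<Sum>z\<in>Z. u z *\<^sub>R f z)}"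
    unfolding convex_cone_iff
  proof safe
    show "\<exists>u. (\<forall>z\<in>Z. u z \<ge> 0) \<and> 0 = (\<Sum>z\<in>Z. u z *\<^sub>R f z)"
      by (rule exI[of _ "\<lambda>_. 0"]) simp
  next
    fix u1 u2 :: "'b \<Rightarrow> real" assume "\<forall>z\<in>Z. u1 z \<ge> 0" "\<forall>z\<in>Z. u2 z \<ge> 0"
    then show "\<exists>u. (\<forall>z\<in>Z. u z \<ge> 0) \<and> (\<Sum>z\<in>Z. u1 z *\<^sub>R f z) + (\<Sum>z\<in>Z. u2 z *\<^sub>R f z) = (\<Sum>z\<in>Z. u z *\<^sub>R f z)"
      by (intro exI[of _ "\<lambda>z. u1 z + u2 z"]) (simp add: scaleR_add_left sum.distrib)
  next
    fix u1 :: "'b \<Rightarrow> real" and c :: real assume "\<forall>z\<in>Z. u1 z \<ge> 0" "c \<ge> 0"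
    then show "\<exists>u. (\<forall>z\<in>Z. u z \<ge> 0) \<and> c *\<^sub>R (\<Sum>z\<in>Z. u1 z *\<^sub>R f z) = (\<Sum>z\<in>Z. u z *\<^sub>R f z)"
      by (intro exI[of _ "\<lambda>z. c * u1 z"]) (simp add: scaleR_sum_right)
  qed
qed

lemma cone_rep:
  fixes E :: "('d::finite) edge set"
  assumes "reaction_network E" and "endotactic E" and e: "e \<in> E"
  shows "\<exists>u. (\<forall>z\<in>src ` E. u z \<ge> 0) \<and> rvec e = (\<Sum>z\<in>src ` E. u z *\<^sub>R (z - src e))"
proof -
  let ?S = "(\<lambda>z. z - src e) ` (src ` E)"
  let ?H = "convex_cone hull ?S"
  have fin: "finite (src ` E)" using assms(1) by (simp add: reaction_network_def)
  have "rvec e \<in> ?H"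
  proof (rule ccontr)
    assume nin: "rvec e \<notin> ?H"
    have "closed ?H" using fin by (intro closed_convex_cone_hull) simp
    moreover have "convex ?H" by (rule convex_convex_cone_hull)
    ultimately obtain a b where ab: "inner a (rvec e) < b" "\<forall>x\<in>?H. inner a x > b"
      using separating_hyperplane_closed_point[of ?H "rvec e"] nin by meson
    have "inner a 0 > b" using ab(2) convex_cone_hull_contains_0 by blast
    hence "b < 0" by simp
    have nn: "inner a x \<ge> 0" if "x \<in> ?H" for x
    proof (rule ccontr)
      assume "\<not> inner a x \<ge> 0"
      hence neg: "inner a x < 0" by simp
      define c where "c = b / inner a x"
      have "c \<ge> 0" using neg \<open>b < 0\<close> by (simp add: c_def divide_nonpos_neg)
      hence "c *\<^sub>R x \<in> ?H" using that convex_cone_hull_mul by blast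
      hence "inner a (c *\<^sub>R x) > b" using ab(2) by blast
      moreover have "inner a (c *\<^sub>R x) = b" using neg by (simp add: c_def)
      ultimately show False by simp
    qed
    have "a \<bullet> rvec e < 0" using ab(1) \<open>b < 0\<close> by simp
    then obtain ej where ej: "ej \<in> E" "a \<bullet> (src ej - src e) < 0"
      using assms(2) e unfolding endotactic_def by blast
    have "src ej - src e \<in> ?S" using ej(1) by blast
    hence "src ej - src e \<in> ?H" by (rule hull_inc)
    hence "a \<bullet> (src ej - src e) \<ge> 0" by (rule nn)
    with ej(2) show False by simp
  qed
  hence "rvec e \<in> {v. \<exists>u. (\<forall>z\<in>src ` E. u z \<ge> 0) \<and> v = (\<Sum>z\<in>src ` E. u z *\<^sub>R (z - src e))}"
    using cone_sub[OF fin, of "\<lambda>z. z - src e"] by (rule subsetD[rotated])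
  then show ?thesis by (simp only: mem_Collect_eq)
qed


theorem lemma4:
  fixes E :: "('d::finite) edge set"
  assumes rn: "reaction_network E" and en: "endotactic E"
  shows "(\<exists>E'. reaction_network E' \<and> source_only E' \<and> E \<sqsubseteq>\<^sub>R E' \<and> nodes E' = src ` E)
         \<and> eff_source_only E"
proof -
  define Sy where "Sy = src ` E"
  have finE: "finite E" and neE: "E \<noteq> {}" and nsl: "\<forall>e\<in>E. src e \<noteq> tgt e"
    and nn: "\<forall>y\<in>nodes E. \<forall>i. y $ i \<ge> 0"
    using rn by (auto simp: reaction_network_def)
  have finS: "finite Sy" using finE by (simp add: Sy_def)
  have "\<forall>e\<in>E. \<exists>u. (\<forall>z\<in>Sy. u z \<ge> 0) \<and> rvec e = (\<Sum>z\<in>Sy. u z *\<^sub>R (z - src e))"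
    using cone_rep[OF rn en] by (simp add: Sy_def)
  then obtain c where c: "\<And>e. e \<in> E \<Longrightarrow> (\<forall>z\<in>Sy. c e z \<ge> 0) \<and> rvec e = (\<Sum>z\<in>Sy. c e z *\<^sub>R (z - src e))"
    by metis
  have out: "\<exists>z\<in>Sy. z \<noteq> src e \<and> c e z > 0" if e: "e \<in> E" for e
  proof (rule ccontr)
    assume neg: "\<not> (\<exists>z\<in>Sy. z \<noteq> src e \<and> c e z > 0)"
    have "c e z *\<^sub>R (z - src e) = 0" if z: "z \<in> Sy" for z
    proof (cases "z = src e")
      case False
      with neg z have "c e z \<le> 0" by auto
      moreover have "c e z \<ge> 0" using c[OF e] z by auto
      ultimately show ?thesis by simp
    qed simp
    hence "(\<Sum>z\<in>Sy. c e z *\<^sub>R (z - src e)) = 0" by (intro sum.neutral) blast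
    hence "rvec e = 0" using c[OF e] by simp
    thus False using nsl e by (metis eq_iff_diff_eq_0 rvec_def)
  qed
  define E' where "E' = {p \<in> Sy \<times> Sy. snd p \<noteq> fst p \<and> (\<exists>e\<in>E. src e = fst p \<and> c e (snd p) > 0)}"
  have E'sub: "E' \<subseteq> Sy \<times> Sy" by (auto simp: E'_def)
  have finE': "finite E'" using E'sub finS by (meson finite_SigmaI rev_finite_subset)
  have srcE': "src ` E' = Sy"
  proof
    show "src ` E' \<subseteq> Sy" using E'sub by (auto simp: src_def)
    show "Sy \<subseteq> src ` E'"
    proof
      fix y assume "y \<in> Sy"
      then obtain e where e: "e \<in> E" "y = src e" by (auto simp: Sy_def)
      then obtain z where z: "z \<in> Sy" "z \<noteq> src e" "c e z > 0" using out by blast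
      have "(y, z) \<in> E'" using e z \<open>y \<in> Sy\<close> by (auto simp: E'_def)
      thus "y \<in> src ` E'" by (force simp: src_def)
    qed
  qed
  have tgtE': "tgt ` E' \<subseteq> Sy" using E'sub by (auto simp: tgt_def)
  have nodesE': "nodes E' = Sy" using srcE' tgtE' by (auto simp: nodes_def)
  have rnE': "reaction_network E'"
    unfolding reaction_network_def
  proof (intro conjI)
    show "finite E'" by (rule finE')
    show "E' \<noteq> {}" using srcE' neE by (auto simp: Sy_def)
    show "\<forall>e\<in>E'. src e \<noteq> tgt e" by (auto simp: E'_def src_def tgt_def)
    show "\<forall>y\<in>nodes E'. \<forall>i. 0 \<le> y $ i" using nodesE' nn by (auto simp: Sy_def nodes_def)
  qed
  have soE': "source_only E'" using srcE' tgtE' by (simp add: source_only_def)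
  have real: "E \<sqsubseteq>\<^sub>R E'"
    unfolding realizable_sub_def
  proof (intro allI impI)
    fix K assume K: "pos_rates E K"
    define K' where "K' p = (\<Sum>e\<in>E. if src e = fst p then K e * c e (snd p) else 0)" for p
    have K'nn: "K' p \<ge> 0" if "snd p \<in> Sy" for p
      unfolding K'_def using K c that by (intro sum_nonneg) (auto simp: pos_rates_def less_imp_le)
    have K'pos: "pos_rates E' K'"
      unfolding pos_rates_def
    proof
      fix p assume p: "p \<in> E'"
      then obtain e where e: "e \<in> E" "src e = fst p" "c e (snd p) > 0" and ps: "snd p \<in> Sy"
        by (auto simp: E'_def)
      have "0 < (if src e = fst p then K e * c e (snd p) else 0)"
        using e K by (simp add: pos_rates_def)
      also have "\<dots> \<le> K' p" unfolding K'_def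
        using K c ps e(1) by (intro member_le_sum finE) (auto simp: pos_rates_def less_imp_le)
      finally show "K' p > 0" .
    qed
    have K'zero: "K' p = 0" if "p \<in> Sy \<times> Sy" "p \<notin> E'" "snd p \<noteq> fst p" for p
      unfolding K'_def
    proof (rule sum.neutral, rule ballI)
      fix e assume e: "e \<in> E"
      show "(if src e = fst p then K e * c e (snd p) else 0) = 0"
      proof (cases "src e = fst p")
        case True
        hence "\<not> c e (snd p) > 0" using that e by (auto simp: E'_def)
        moreover have "c e (snd p) \<ge> 0" using c[OF e] that by auto
        ultimately show ?thesis by simp
      qed simp
    qed
    have "gen_sys E' K' x = gen_sys E K x" for x
    proof -
      define F where "F y z = (\<Sum>e\<in>E. if src e = y then (K e * c e z * monom x y) *\<^sub>R (z - y) else 0)" for y z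
      have "gen_sys E' K' x = (\<Sum>p\<in>E'. (K' p * monom x (fst p)) *\<^sub>R (snd p - fst p))"
        by (simp add: gen_sys_def src_def tgt_def rvec_def)
      also have "\<dots> = (\<Sum>p\<in>Sy \<times> Sy. (K' p * monom x (fst p)) *\<^sub>R (snd p - fst p))"
        using K'zero by (intro sum.mono_neutral_left finite_SigmaI finS E'sub) auto
      also have "\<dots> = (\<Sum>y\<in>Sy. \<Sum>z\<in>Sy. (K' (y, z) * monom x y) *\<^sub>R (z - y))"
        by (simp add: sum.cartesian_product case_prod_unfold)
      also have "\<dots> = (\<Sum>y\<in>Sy. \<Sum>z\<in>Sy. F y z)"
        unfolding F_def K'_def sum_distrib_right scaleR_sum_left
        by (intro sum.cong refl) simp
      also have "\<dots> = (\<Sum>e\<in>E. \<Sum>y\<in>Sy. \<Sum>z\<in>Sy. if src e = y then (K e * c e z * monom x y) *\<^sub>R (z - y) else 0)"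
        unfolding F_def by (subst sum.swap) (subst (2) sum.swap, rule refl)
      also have "\<dots> = (\<Sum>e\<in>E. \<Sum>z\<in>Sy. (K e * c e z * monom x (src e)) *\<^sub>R (z - src e))"
      proof (rule sum.cong[OF refl])
        fix e assume e: "e \<in> E"
        have "(\<Sum>y\<in>Sy. \<Sum>z\<in>Sy. if src e = y then (K e * c e z * monom x y) *\<^sub>R (z - y) else 0)
            = (\<Sum>y\<in>Sy. if src e = y then (\<Sum>z\<in>Sy. (K e * c e z * monom x y) *\<^sub>R (z - y)) else 0)"
          by (intro sum.cong refl) auto
        also have "\<dots> = (\<Sum>z\<in>Sy. (K e * c e (z) * monom x (src e)) *\<^sub>R (z - src e))"
          using e finS by (simp add: sum.delta Sy_def)
        finally show "(\<Sum>y\<in>Sy. \<Sum>z\<in>Sy. if src e = y then (K e * c e z * monom x y) *\<^sub>R (z - y) else 0)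
            = (\<Sum>z\<in>Sy. (K e * c e z * monom x (src e)) *\<^sub>R (z - src e))" .
      qed
      also have "\<dots> = (\<Sum>e\<in>E. (K e * monom x (src e)) *\<^sub>R rvec e)"
      proof (rule sum.cong[OF refl])
        fix e assume e: "e \<in> E"
        show "(\<Sum>z\<in>Sy. (K e * c e z * monom x (src e)) *\<^sub>R (z - src e)) = (K e * monom x (src e)) *\<^sub>R rvec e"
          using c[OF e] by (simp add: scaleR_sum_right mult.commute mult.left_commute)
      qed
      also have "\<dots> = gen_sys E K x" by (simp add: gen_sys_def)
      finally show ?thesis .
    qed
    thus "\<exists>K'. pos_rates E' K' \<and> same_sys (gen_sys E' K') (gen_sys E K)"
      using K'pos by (auto simp: same_sys_def)
  qed
  have ex: "\<exists>E'. reaction_network E' \<and> source_only E' \<and> E \<sqsubseteq>\<^sub>R E' \<and> nodes E' = src ` E"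
    using rnE' soE' real nodesE' by (auto simp: Sy_def)
  moreover have "eff_source_only E"
    unfolding eff_source_only_def source_only_sys_def
  proof (intro allI impI)
    fix K assume "pos_rates E K"
    then obtain K' where "pos_rates E' K'" "same_sys (gen_sys E' K') (gen_sys E K)"
      using real by (auto simp: realizable_sub_def)
    thus "\<exists>F L. reaction_network F \<and> source_only F \<and> pos_rates F L \<and> same_sys (gen_sys F L) (gen_sys E K)"
      using rnE' soE' by blast
  qed
  ultimately show ?thesis by blast
qed

end
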